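(* Let $p,q,n$ be positive integers and let $C_{p,q,n}$ be the group with generators $P,Q$ and defining relations $P^p=Q^q=(PQ)^n=1$, $P^2Q=QP^2$, $PQ^2=Q^2P$; suppose that $PQ\neq QP$ in $C_{p,q,n}$. Then $p$ and $q$ are even and $P^{2n}Q^{2n}=1$. Moreover $C_{p,q,n}=C_{p',q',n}$ (i.e. $P^{p'}=Q^{q'}=1$ in $C_{p,q,n}$), where $p'=(p,[q,2n])$ and $q'=(q,[p,2n])$, with $(\cdot,\cdot)$ the greatest common divisor and $[\cdot,\cdot]$ the least common multiple. The case in which both $p'=q'\equiv 2\pmod 4$ and $n=2$ does not occur, and $|C_{p,q,n}|=p'(q',2n)n/2$. Finally, the subgroup $S=\langle P^2,Q^2\rangle$ is abelian and central in $C_{p,q,n}$, of order $|S|=p'(q',2n)/4$, and $C_{p,q,n}/S\cong D_n$, the dihedral group of order $2n$. *)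

theory Defs
  imports "HOL-Algebra.Algebra"
begin

text \<open>A letter is a pair (g, i): g = False means generator P, g = True means Q;
  i = True means the inverse of that generator. Words are lists of letters.\<close>

type_synonym letter = "bool \<times> bool"
type_synonym word = "letter list"

definition inv_letter :: "letter \<Rightarrow> letter" where
  "inv_letter x = (fst x, \<not> snd x)"

definition inv_word :: "word \<Rightarrow> word" where
  "inv_word w = rev (map inv_letter w)"

inductive pres_eq :: "word set \<Rightarrow> word \<Rightarrow> word \<Rightarrow> bool" for R where
  refl: "pres_eq R w w"
| sym: "pres_eq R u v \<Longrightarrow> pres_eq R v u"
| trans: "pres_eq R u v \<Longrightarrow> pres_eq R v w \<Longrightarrow> pres_eq R u w"
| cancel: "pres_eq R (u @ [x, inv_letter x] @ v) (u @ v)"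
| relator: "r \<in> R \<Longrightarrow> pres_eq R (u @ r @ v) (u @ v)"

definition pres_rel :: "word set \<Rightarrow> (word \<times> word) set" where
  "pres_rel R = {(u, v). pres_eq R u v}"

definition presented_group :: "word set \<Rightarrow> word set monoid" where
  "presented_group R =
     \<lparr> carrier = UNIV // pres_rel R,
       monoid.mult = (\<lambda>A B. pres_rel R `` {(SOME a. a \<in> A) @ (SOME b. b \<in> B)}),
       monoid.one = pres_rel R `` {[]} \<rparr>"

definition gen_P :: letter where "gen_P = (False, False)"
definition gen_Q :: letter where "gen_Q = (True, False)"

definition word_class :: "word set \<Rightarrow> word \<Rightarrow> word set" where
  "word_class R w = pres_rel R `` {w}"

definition C_relators :: "nat \<Rightarrow> nat \<Rightarrow> nat \<Rightarrow> word set" where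
  "C_relators p q n =
     { replicate p gen_P,
       replicate q gen_Q,
       concat (replicate n [gen_P, gen_Q]),
       [gen_P, gen_P, gen_Q] @ inv_word [gen_Q, gen_P, gen_P],
       [gen_P, gen_Q, gen_Q] @ inv_word [gen_Q, gen_Q, gen_P] }"

definition C_group :: "nat \<Rightarrow> nat \<Rightarrow> nat \<Rightarrow> word set monoid" where
  "C_group p q n = presented_group (C_relators p q n)"

definition C_P :: "nat \<Rightarrow> nat \<Rightarrow> nat \<Rightarrow> word set" where
  "C_P p q n = word_class (C_relators p q n) [gen_P]"

definition C_Q :: "nat \<Rightarrow> nat \<Rightarrow> nat \<Rightarrow> word set" where
  "C_Q p q n = word_class (C_relators p q n) [gen_Q]"

text \<open>Elements (a, s) stand for r^a s^[s] with r a rotation of order n and s a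
  reflection; (a,s)(b,t) = (a + (-1)^s b mod n, s xor t).\<close>

definition dihedral_group :: "nat \<Rightarrow> (int \<times> bool) monoid" where
  "dihedral_group n =
     \<lparr> carrier = {0..<int n} \<times> UNIV,
       monoid.mult = (\<lambda>(a, s) (b, t). ((a + (if s then - b else b)) mod int n, s \<noteq> t)),
       monoid.one = (0, False) \<rparr>"

end

theory Submission
  imports Defs
begin



lemma pres_eq_cong: "pres_eq R u v \<Longrightarrow> pres_eq R (w @ u @ z) (w @ v @ z)"
proof (induction rule: pres_eq.induct)
  case (refl w) then show ?case by (rule pres_eq.refl)
next
  case (sym u v) then show ?case by (blast intro: pres_eq.sym)
next
  case (trans u v w) then show ?case by (metis pres_eq.trans)
next
  case (cancel u x v)
  from pres_eq.cancel[of R "w @ u" x "v @ z"] show ?case by simp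
next
  case (relator r u v)
  from pres_eq.relator[OF relator, of "w @ u" "v @ z"] show ?case by simp
qed

lemma pres_eq_app: "pres_eq R u u' \<Longrightarrow> pres_eq R v v' \<Longrightarrow> pres_eq R (u @ v) (u' @ v')"
  using pres_eq_cong[of R u u' "[]" v] pres_eq_cong[of R v v' u' "[]"]
  by (auto intro: pres_eq.trans)

lemma inv_letter_inv[simp]: "inv_letter (inv_letter x) = x"
  by (simp add: inv_letter_def)

lemma inv_word_cancel: "pres_eq R (inv_word w @ w) []"
proof (induction w)
  case Nil then show ?case by (simp add: inv_word_def pres_eq.refl)
next
  case (Cons x w)
  have "inv_word (x # w) @ (x # w) = inv_word w @ [inv_letter x, inv_letter (inv_letter x)] @ w"
    by (simp add: inv_word_def)
  then have "pres_eq R (inv_word (x # w) @ (x # w)) (inv_word w @ w)"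
    using pres_eq.cancel[of R "inv_word w" "inv_letter x" w] by simp
  then show ?case using Cons pres_eq.trans by blast
qed

lemma equiv_pres_rel: "equiv UNIV (pres_rel R)"
  unfolding equiv_def refl_on_def sym_def trans_def pres_rel_def
  by (auto intro: pres_eq.refl pres_eq.sym pres_eq.trans)

lemma word_class_eq_iff: "word_class R u = word_class R v \<longleftrightarrow> pres_eq R u v"
  unfolding word_class_def
  using eq_equiv_class_iff[OF equiv_pres_rel, of u v] by (simp add: pres_rel_def)

lemma in_word_class: "w \<in> word_class R u \<longleftrightarrow> pres_eq R u w"
  by (simp add: word_class_def pres_rel_def)

lemma pg_carrier: "carrier (presented_group R) = range (word_class R)"
  by (auto simp: presented_group_def quotient_def word_class_def)

lemma pg_one: "\<one>\<^bsub>presented_group R\<^esub> = word_class R []"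
  by (simp add: presented_group_def word_class_def)

lemma pg_mult: "word_class R u \<otimes>\<^bsub>presented_group R\<^esub> word_class R v = word_class R (u @ v)"
proof -
  have u: "pres_eq R u (SOME a. a \<in> word_class R u)"
    using someI[of "\<lambda>a. a \<in> word_class R u" u] by (simp add: in_word_class pres_eq.refl)
  have v: "pres_eq R v (SOME a. a \<in> word_class R v)"
    using someI[of "\<lambda>a. a \<in> word_class R v" v] by (simp add: in_word_class pres_eq.refl)
  have "word_class R ((SOME a. a \<in> word_class R u) @ (SOME a. a \<in> word_class R v)) = word_class R (u @ v)"
    using pres_eq_app[OF u v] by (simp add: word_class_eq_iff pres_eq.sym)
  then show ?thesis by (simp add: presented_group_def word_class_def)
qed

lemma group_pg: "group (presented_group R)"
proof (rule groupI)
  fix x y assume "x \<in> carrier (presented_group R)" "y \<in> carrier (presented_group R)"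
  then show "x \<otimes>\<^bsub>presented_group R\<^esub> y \<in> carrier (presented_group R)"
    by (auto simp: pg_carrier pg_mult)
next
  show "\<one>\<^bsub>presented_group R\<^esub> \<in> carrier (presented_group R)" by (simp add: pg_carrier pg_one)
next
  fix x y z assume "x \<in> carrier (presented_group R)" "y \<in> carrier (presented_group R)"
     "z \<in> carrier (presented_group R)"
  then show "x \<otimes>\<^bsub>presented_group R\<^esub> y \<otimes>\<^bsub>presented_group R\<^esub> z =
       x \<otimes>\<^bsub>presented_group R\<^esub> (y \<otimes>\<^bsub>presented_group R\<^esub> z)"
    by (auto simp: pg_carrier pg_mult)
next
  fix x assume "x \<in> carrier (presented_group R)"
  then show "\<one>\<^bsub>presented_group R\<^esub> \<otimes>\<^bsub>presented_group R\<^esub> x = x"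
    by (auto simp: pg_carrier pg_mult pg_one)
next
  fix x assume "x \<in> carrier (presented_group R)"
  then obtain u where x: "x = word_class R u" by (auto simp: pg_carrier)
  show "\<exists>y\<in>carrier (presented_group R). y \<otimes>\<^bsub>presented_group R\<^esub> x = \<one>\<^bsub>presented_group R\<^esub>"
    by (rule bexI[of _ "word_class R (inv_word u)"])
       (auto simp: x pg_mult pg_one pg_carrier word_class_eq_iff inv_word_cancel)
qed

lemma pg_relator: "r \<in> R \<Longrightarrow> word_class R r = word_class R []"
  using pres_eq.relator[of r R "[]" "[]"] by (simp add: word_class_eq_iff)




type_synonym tt = "int \<times> int \<times> int \<times> bool"

definition tmul :: "tt \<Rightarrow> tt \<Rightarrow> tt" where
  "tmul s t = (case s of (i,j,k,e) \<Rightarrow> case t of (i',j',k',e') \<Rightarrow>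
     if e then (i+i'+k'+(if e' then 1 else 0), j+j'+k', k-k', \<not>e')
     else (i+i', j+j', k+k', e'))"

definition tone :: tt where "tone = (0,0,0,False)"

definition evl :: "letter \<Rightarrow> tt" where
  "evl l = (if \<not> fst l then (if \<not> snd l then (0,0,0,True) else (-1,0,0,True))
            else (if \<not> snd l then (0,1,-1,True) else (0,0,-1,True)))"

definition evalw :: "word \<Rightarrow> tt" where
  "evalw w = foldr (\<lambda>l acc. tmul (evl l) acc) w tone"

lemma tmul_simps[simp]:
  "tmul (i,j,k,False) (i',j',k',e') = (i+i', j+j', k+k', e')"
  "tmul (i,j,k,True) (i',j',k',e') = (i+i'+k'+(if e' then 1 else 0), j+j'+k', k-k', \<not>e')"
  by (simp_all add: tmul_def)

lemma tmul_assoc: "tmul (tmul s t) u = tmul s (tmul t u)"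
  by (cases s; cases t; cases u) (auto simp: tmul_def)

lemma tmul_tone[simp]: "tmul tone t = t" "tmul t tone = t"
  by (cases t; auto simp: tmul_def tone_def)+

lemma evalw_Nil[simp]: "evalw [] = tone" by (simp add: evalw_def)
lemma evalw_Cons[simp]: "evalw (l # w) = tmul (evl l) (evalw w)" by (simp add: evalw_def)
lemma evalw_append: "evalw (u @ v) = tmul (evalw u) (evalw v)"
  by (induction u) (auto simp: tmul_assoc)

lemma evl_inv: "tmul (evl x) (evl (inv_letter x)) = tone"
  by (cases x) (auto simp: evl_def inv_letter_def tone_def)

lemma evalw_P2: "evalw (replicate (2*m) gen_P) = (int m,0,0,False)"
proof (induction m)
  case 0 then show ?case by (simp add: tone_def)
next
  case (Suc m)
  have "replicate (2 * Suc m) gen_P = gen_P # gen_P # replicate (2*m) gen_P" by simp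
  then show ?case using Suc by (simp add: evl_def gen_P_def)
qed

lemma evalw_Q2: "evalw (replicate (2*m) gen_Q) = (0,int m,0,False)"
proof (induction m)
  case 0 then show ?case by (simp add: tone_def)
next
  case (Suc m)
  have "replicate (2 * Suc m) gen_Q = gen_Q # gen_Q # replicate (2*m) gen_Q" by simp
  then show ?case using Suc by (simp add: evl_def gen_Q_def)
qed

lemma evalw_PQ: "evalw (concat (replicate m [gen_P, gen_Q])) = (0,0,int m,False)"
  by (induction m) (auto simp: tone_def evl_def gen_P_def gen_Q_def)

lemma evalw_r4: "evalw ([gen_P, gen_P, gen_Q] @ inv_word [gen_Q, gen_P, gen_P]) = tone"
  by (simp add: inv_word_def evl_def gen_P_def gen_Q_def inv_letter_def tone_def)

lemma evalw_r5: "evalw ([gen_P, gen_Q, gen_Q] @ inv_word [gen_Q, gen_Q, gen_P]) = tone"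
  by (simp add: inv_word_def evl_def gen_P_def gen_Q_def inv_letter_def tone_def)

locale cq =
  fixes A B n :: nat
  assumes A_pos: "A > 0" and B_pos: "B > 0" and n_pos: "n > 0"
begin

definition Lset :: "(int \<times> int) set" where
  "Lset = {(x,y). \<exists>\<alpha> \<beta> \<delta>. x = \<alpha> * int A + \<delta> * int n \<and> y = \<beta> * int B + \<delta> * int n}"

definition teq :: "tt \<Rightarrow> tt \<Rightarrow> bool" where
  "teq s t = (case s of (i,j,k,e) \<Rightarrow> case t of (i',j',k',e') \<Rightarrow>
      e = e' \<and> int n dvd (k - k') \<and> (i - i', j - j') \<in> Lset)"

lemma Lset_0: "(0,0) \<in> Lset"
  unfolding Lset_def by (rule CollectI, simp, rule exI[of _ 0], rule exI[of _ 0], rule exI[of _ 0], simp)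

lemma Lset_add: assumes "(x,y) \<in> Lset" "(x',y') \<in> Lset" shows "(x+x', y+y') \<in> Lset"
proof -
  obtain a b d where 1: "x = a * int A + d * int n" "y = b * int B + d * int n" using assms(1) by (auto simp: Lset_def)
  obtain a' b' d' where 2: "x' = a' * int A + d' * int n" "y' = b' * int B + d' * int n" using assms(2) by (auto simp: Lset_def)
  show ?thesis unfolding Lset_def
    by (rule CollectI, simp, rule exI[of _ "a+a'"], rule exI[of _ "b+b'"], rule exI[of _ "d+d'"]) (simp add: 1 2 algebra_simps)
qed

lemma Lset_smul: assumes "(x,y) \<in> Lset" shows "(c*x, c*y) \<in> Lset"
proof -
  obtain a b d where 1: "x = a * int A + d * int n" "y = b * int B + d * int n" using assms(1) by (auto simp: Lset_def)
  show ?thesis unfolding Lset_def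
    by (rule CollectI, simp, rule exI[of _ "c*a"], rule exI[of _ "c*b"], rule exI[of _ "c*d"]) (simp add: 1 algebra_simps)
qed

lemma Lset_neg: "(x,y) \<in> Lset \<Longrightarrow> (-x, -y) \<in> Lset"
  using Lset_smul[of x y "-1"] by simp

lemma Lset_A: "(int A, 0) \<in> Lset"
  unfolding Lset_def by (rule CollectI, simp, rule exI[of _ 1], rule exI[of _ 0], rule exI[of _ 0], simp)
lemma Lset_B: "(0, int B) \<in> Lset"
  unfolding Lset_def by (rule CollectI, simp, rule exI[of _ 0], rule exI[of _ 1], rule exI[of _ 0], simp)
lemma Lset_n: "(int n, int n) \<in> Lset"
  unfolding Lset_def by (rule CollectI, simp, rule exI[of _ 0], rule exI[of _ 0], rule exI[of _ 1], simp)

lemma teq_refl: "teq t t"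
  by (cases t) (auto simp: teq_def Lset_0)

lemma teq_sym: "teq s t \<Longrightarrow> teq t s"
  by (cases s; cases t) (auto simp: teq_def dvd_diff_commute dest: Lset_neg)

lemma teq_trans: "teq s t \<Longrightarrow> teq t u \<Longrightarrow> teq s u"
  apply (cases s; cases t; cases u)
  apply (clarsimp simp: teq_def)
  subgoal for i j k e i' j' k' i'' j'' k''
    using Lset_add[of "i - i'" "j - j'" "i' - i''" "j' - j''"] dvd_add[of "int n" "k - k'" "k' - k''"]
    by simp
  done

lemma teq_N:
  assumes "(x,y) \<in> Lset"
  shows "teq (tmul (tmul s (x, y, int n * c, False)) t) (tmul s t)"
proof -
  obtain i j k e where s: "s = (i,j,k,e)" by (cases s)
  obtain i' j' k' e' where t: "t = (i',j',k',e')" by (cases t)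
  have nn: "(int n * c, int n * c) \<in> Lset" using Lset_smul[OF Lset_n, of c] by (simp add: mult.commute)
  show ?thesis
  proof (cases e)
    case True
    then show ?thesis using Lset_add[OF assms nn]
      by (simp add: s t teq_def algebra_simps)
  next
    case False
    then show ?thesis using assms by (simp add: s t teq_def algebra_simps)
  qed
qed

abbreviation "R \<equiv> C_relators (2*A) (2*B) n"

lemma relator_eval:
  assumes "r \<in> R"
  shows "\<exists>x y c. (x,y) \<in> Lset \<and> evalw r = (x, y, int n * c, False)"
proof -
  have "r = replicate (2*A) gen_P \<or> r = replicate (2*B) gen_Q \<or> r = concat (replicate n [gen_P, gen_Q])
    \<or> r = [gen_P, gen_P, gen_Q] @ inv_word [gen_Q, gen_P, gen_P]
    \<or> r = [gen_P, gen_Q, gen_Q] @ inv_word [gen_Q, gen_Q, gen_P]"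
    using assms by (simp add: C_relators_def)
  then show ?thesis
  proof (elim disjE)
    assume "r = replicate (2*A) gen_P"
    then show ?thesis using Lset_A by (auto simp: evalw_P2)
  next
    assume "r = replicate (2*B) gen_Q"
    then show ?thesis using Lset_B by (auto simp: evalw_Q2)
  next
    assume "r = concat (replicate n [gen_P, gen_Q])"
    then show ?thesis using Lset_0 by (auto simp: evalw_PQ intro!: exI[of _ 1])
  next
    assume "r = [gen_P, gen_P, gen_Q] @ inv_word [gen_Q, gen_P, gen_P]"
    then show ?thesis using Lset_0 evalw_r4 by (auto simp: tone_def intro!: exI[of _ 0])
  next
    assume "r = [gen_P, gen_Q, gen_Q] @ inv_word [gen_Q, gen_Q, gen_P]"
    then show ?thesis using Lset_0 evalw_r5 by (auto simp: tone_def intro!: exI[of _ 0])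
  qed
qed

lemma pres_eq_teq: "pres_eq R u v \<Longrightarrow> teq (evalw u) (evalw v)"
proof (induction rule: pres_eq.induct)
  case (refl w) then show ?case by (rule teq_refl)
next
  case (sym u v) then show ?case by (blast intro: teq_sym)
next
  case (trans u v w) then show ?case by (blast intro: teq_trans)
next
  case (cancel u x v)
  have "evalw (u @ [x, inv_letter x] @ v) = tmul (evalw u) (tmul (tmul (evl x) (evl (inv_letter x))) (evalw v))"
    by (simp add: evalw_append tmul_assoc)
  then show ?case by (simp add: evl_inv evalw_append teq_refl)
next
  case (relator r u v)
  then obtain x y c where "(x,y) \<in> Lset" and e: "evalw r = (x, y, int n * c, False)"
    using relator_eval by blast
  then have "teq (tmul (tmul (evalw u) (evalw r)) (evalw v)) (tmul (evalw u) (evalw v))"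
    using teq_N by simp
  then show ?case by (simp add: evalw_append tmul_assoc)
qed

end



context cq begin

definition "g = gcd B n"
definition "Ag = gcd A (lcm B n)"
definition "Bg = gcd B (lcm A n)"

lemma g_pos: "g > 0" using n_pos by (simp add: g_def)
lemma Ag_pos: "Ag > 0" using A_pos by (simp add: Ag_def)
lemma Bg_pos: "Bg > 0" using B_pos by (simp add: Bg_def)

lemma lcm_split: "lcm (x::nat) n = (x div gcd x n) * n"
proof -
  have "x * n = gcd x n * lcm x n" by (rule prod_gcd_lcm_nat)
  moreover have "x = gcd x n * (x div gcd x n)" by simp
  ultimately have "gcd x n * ((x div gcd x n) * n) = gcd x n * lcm x n"
    by (metis mult.assoc)
  moreover have "gcd x n \<noteq> 0" using n_pos by simp
  ultimately show ?thesis by (metis mult_left_cancel)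
qed

lemma Lset_lcmB: "(int (lcm B n), 0) \<in> Lset"
proof -
  define B1 where "B1 = B div g"
  define n1 where "n1 = n div g"
  have B: "B = g * B1" and nn: "n = g * n1" by (simp_all add: B1_def n1_def g_def)
  have l: "lcm B n = B1 * n" using lcm_split[of B] by (simp add: B1_def g_def)
  show ?thesis unfolding Lset_def
    apply (rule CollectI, simp)
    apply (rule exI[of _ 0], rule exI[of _ "- int n1"], rule exI[of _ "int B1"])
    apply (simp add: l)
    apply (subst B, subst nn) apply (simp add: algebra_simps)
    done
qed

lemma Lset_lcmA: "(0, int (lcm A n)) \<in> Lset"
proof -
  define gg where "gg = gcd A n"
  define A1 where "A1 = A div gg"
  define n1 where "n1 = n div gg"
  have A: "A = gg * A1" and nn: "n = gg * n1" by (simp_all add: A1_def n1_def gg_def)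
  have l: "lcm A n = A1 * n" using lcm_split[of A] by (simp add: A1_def gg_def)
  show ?thesis unfolding Lset_def
    apply (rule CollectI, simp)
    apply (rule exI[of _ "- int n1"], rule exI[of _ 0], rule exI[of _ "int A1"])
    apply (simp add: l)
    apply (subst A, subst nn) apply (simp add: algebra_simps)
    done
qed

lemma Lset_Ag: "(int Ag, 0) \<in> Lset"
proof -
  obtain u v where "u * int A + v * int (lcm B n) = gcd (int A) (int (lcm B n))"
    using bezout_int by blast
  then have e: "u * int A + v * int (lcm B n) = int Ag" by (simp add: Ag_def)
  have "(u * int A + v * int (lcm B n), u * 0 + v * 0) \<in> Lset"
    using Lset_add[OF Lset_smul[OF Lset_A, of u] Lset_smul[OF Lset_lcmB, of v]] by simp
  then show ?thesis by (simp add: e)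
qed

lemma Lset_Bg: "(0, int Bg) \<in> Lset"
proof -
  obtain u v where "u * int B + v * int (lcm A n) = gcd (int B) (int (lcm A n))"
    using bezout_int by blast
  then have e: "u * int B + v * int (lcm A n) = int Bg" by (simp add: Bg_def)
  have "(u * 0 + v * 0, u * int B + v * int (lcm A n)) \<in> Lset"
    using Lset_add[OF Lset_smul[OF Lset_B, of u] Lset_smul[OF Lset_lcmA, of v]] by simp
  then show ?thesis by (simp add: e)
qed

lemma Lset_g: "\<exists>x. (x, int g) \<in> Lset"
proof -
  obtain u v where "u * int B + v * int n = gcd (int B) (int n)"
    using bezout_int by blast
  then have e: "u * int B + v * int n = int g" by (simp add: g_def)
  have "(u * 0 + v * int n, u * int B + v * int n) \<in> Lset"
    using Lset_add[OF Lset_smul[OF Lset_B, of u] Lset_smul[OF Lset_n, of v]] by simp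
  then show ?thesis using e by auto
qed

lemma Lset_g_dvd: "(x,y) \<in> Lset \<Longrightarrow> int g dvd y"
  unfolding Lset_def g_def by auto

lemma Lset_Ag_dvd:
  assumes "(x,0) \<in> Lset" shows "int Ag dvd x"
proof -
  obtain a b d where 1: "x = a * int A + d * int n" "0 = b * int B + d * int n"
    using assms by (auto simp: Lset_def)
  have "int B dvd d * int n" using 1(2) by (metis add.commute add_minus_cancel dvd_minus_iff dvd_triv_right minus_equation_iff add_0_iff)
  moreover have "int n dvd d * int n" by simp
  ultimately have "lcm (int B) (int n) dvd d * int n" by (rule lcm_least)
  moreover have "int Ag dvd lcm (int B) (int n)" by (simp add: Ag_def)
  ultimately have "int Ag dvd d * int n" by (rule dvd_trans[rotated])
  moreover have "int Ag dvd a * int A" by (simp add: Ag_def)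
  ultimately show ?thesis using 1(1) by simp
qed

definition NF :: "tt set" where
  "NF = {0..<int Ag} \<times> {0..<int g} \<times> {0..<int n} \<times> UNIV"

definition x0 where "x0 = (SOME x. (x, int g) \<in> Lset)"

lemma x0: "(x0, int g) \<in> Lset"
  unfolding x0_def using Lset_g by (rule someI_ex)

definition red :: "tt \<Rightarrow> tt" where
  "red t = (case t of (i,j,k,e) \<Rightarrow> ((i - (j div int g) * x0) mod int Ag, j mod int g, k mod int n, e))"

lemma red_NF: "red t \<in> NF"
  using Ag_pos g_pos n_pos by (cases t) (auto simp: red_def NF_def)

lemma teq_red: "teq t (red t)"
proof -
  obtain i j k e where t: "t = (i,j,k,e)" by (cases t)
  define jq where "jq = j div int g"
  define i2 where "i2 = i - jq * x0"
  have L1: "(jq * x0, jq * int g) \<in> Lset" by (rule Lset_smul[OF x0])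
  have L2: "((i2 div int Ag) * int Ag, (i2 div int Ag) * 0) \<in> Lset" by (rule Lset_smul[OF Lset_Ag])
  have "(jq * x0 + (i2 div int Ag) * int Ag, jq * int g + (i2 div int Ag) * 0) \<in> Lset"
    by (rule Lset_add[OF L1 L2])
  moreover have "i - i2 mod int Ag = jq * x0 + (i2 div int Ag) * int Ag"
    by (simp add: i2_def minus_mod_eq_mult_div[symmetric] algebra_simps)
  moreover have "j - j mod int g = jq * int g"
    by (simp add: jq_def minus_mod_eq_mult_div[symmetric] algebra_simps)
  ultimately show ?thesis
    by (simp add: t red_def teq_def jq_def[symmetric] i2_def[symmetric] mod_eq_dvd_iff[symmetric])
qed

lemma mod_eq_small: "0 \<le> (a::int) \<Longrightarrow> a < m \<Longrightarrow> 0 \<le> b \<Longrightarrow> b < m \<Longrightarrow> m dvd a - b \<Longrightarrow> a = b"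
  by (metis mod_eq_dvd_iff mod_pos_pos_trivial)

lemma NF_teq: "s \<in> NF \<Longrightarrow> t \<in> NF \<Longrightarrow> teq s t \<Longrightarrow> s = t"
proof -
  assume s: "s \<in> NF" and t: "t \<in> NF" and st: "teq s t"
  obtain i j k e where s': "s = (i,j,k,e)" by (cases s)
  obtain i' j' k' e' where t': "t = (i',j',k',e')" by (cases t)
  from st have e: "e = e'" and kk: "int n dvd k - k'" and L: "(i - i', j - j') \<in> Lset"
    by (auto simp: s' t' teq_def)
  have k: "k = k'" using s t kk by (auto simp: s' t' NF_def intro: mod_eq_small)
  have j: "j = j'" using s t Lset_g_dvd[OF L] by (auto simp: s' t' NF_def intro: mod_eq_small)
  have "int Ag dvd i - i'" using Lset_Ag_dvd L j by simp
  then have i: "i = i'" using s t by (auto simp: s' t' NF_def intro: mod_eq_small)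
  show "s = t" by (simp add: s' t' e k j i)
qed

lemma card_NF: "card NF = Ag * g * n * 2"
  by (simp add: NF_def card_cartesian_product)

definition NF0 :: "tt set" where
  "NF0 = {0..<int Ag} \<times> {0..<int g} \<times> {0} \<times> {False}"

lemma card_NF0: "card NF0 = Ag * g"
  by (simp add: NF0_def card_cartesian_product)

lemma NF0_sub: "NF0 \<subseteq> NF"
  using n_pos by (auto simp: NF0_def NF_def)

lemma red_0: "red (i,j,0,False) \<in> NF0"
  using Ag_pos g_pos by (auto simp: red_def NF0_def)

end



lemma wc_append: "word_class R (u@v) = word_class R u \<otimes>\<^bsub>presented_group R\<^esub> word_class R v"
  by (simp add: pg_mult)

lemma wc_Cons: "word_class R (l#w) = word_class R [l] \<otimes>\<^bsub>presented_group R\<^esub> word_class R w"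
  using wc_append[of R "[l]" w] by simp

lemma wc_carrier[simp]: "word_class R w \<in> carrier (presented_group R)"
  by (simp add: pg_carrier)

lemma wc_replicate: "word_class R (replicate m l) = word_class R [l] [^]\<^bsub>presented_group R\<^esub> m"
proof (induction m)
  case 0 then show ?case by (simp add: pg_one)
next
  case (Suc m)
  interpret group "presented_group R" by (rule group_pg)
  have "word_class R (replicate (Suc m) l) = word_class R [l] \<otimes>\<^bsub>presented_group R\<^esub> word_class R (replicate m l)"
    using wc_Cons[of R l "replicate m l"] by simp
  then show ?case using Suc by (metis nat_pow_Suc2 wc_carrier)
qed

lemma wc_inv_letter: "word_class R [inv_letter l] = inv\<^bsub>presented_group R\<^esub> (word_class R [l])"
proof -
  interpret group "presented_group R" by (rule group_pg)
  have "pres_eq R ([] @ [inv_letter l, inv_letter (inv_letter l)] @ []) ([] @ [])"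
    by (rule pres_eq.cancel)
  then have "word_class R [inv_letter l] \<otimes>\<^bsub>presented_group R\<^esub> word_class R [l] = \<one>\<^bsub>presented_group R\<^esub>"
    by (simp add: pg_mult pg_one word_class_eq_iff)
  then show ?thesis by (intro inv_equality[symmetric]) auto
qed

lemma wc_rel_eq:
  assumes "u @ inv_word v \<in> R" shows "word_class R u = word_class R v"
proof -
  have "pres_eq R ([] @ (u @ inv_word v) @ v) ([] @ v)" by (rule pres_eq.relator[OF assms])
  moreover have "pres_eq R (u @ (inv_word v @ v) @ []) (u @ [] @ [])"
    by (rule pres_eq_cong[OF inv_word_cancel])
  ultimately show ?thesis by (simp add: word_class_eq_iff) (meson pres_eq.sym pres_eq.trans)
qed

locale cg =
  fixes p q n :: nat
begin

abbreviation "RR \<equiv> C_relators p q n"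
abbreviation "G \<equiv> C_group p q n"
abbreviation "P \<equiv> C_P p q n"
abbreviation "Q \<equiv> C_Q p q n"

sublocale G: group G
  unfolding C_group_def by (rule group_pg)

lemma P_carrier[simp]: "P \<in> carrier G" and Q_carrier[simp]: "Q \<in> carrier G"
  by (simp_all add: C_group_def C_P_def C_Q_def)

lemma wcP: "word_class RR [gen_P] = P" by (simp add: C_P_def)
lemma wcQ: "word_class RR [gen_Q] = Q" by (simp add: C_Q_def)

lemma wc_mult: "word_class RR (u @ v) = word_class RR u \<otimes>\<^bsub>G\<^esub> word_class RR v"
  by (simp add: C_group_def pg_mult)

lemma wc_Nil: "word_class RR [] = \<one>\<^bsub>G\<^esub>"
  by (simp add: C_group_def pg_one)

lemma wc_rel1: "word_class RR r = \<one>\<^bsub>G\<^esub>" if "r \<in> RR"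
  using pg_relator[OF that] wc_Nil by simp

lemma P_pow_p: "P [^]\<^bsub>G\<^esub> p = \<one>\<^bsub>G\<^esub>"
proof -
  have "word_class RR (replicate p gen_P) = \<one>\<^bsub>G\<^esub>" by (rule wc_rel1) (simp add: C_relators_def)
  then show ?thesis by (simp add: wc_replicate C_group_def wcP)
qed

lemma Q_pow_q: "Q [^]\<^bsub>G\<^esub> q = \<one>\<^bsub>G\<^esub>"
proof -
  have "word_class RR (replicate q gen_Q) = \<one>\<^bsub>G\<^esub>" by (rule wc_rel1) (simp add: C_relators_def)
  then show ?thesis by (simp add: wc_replicate C_group_def wcQ)
qed

lemma wc_PQ_pow: "word_class RR (concat (replicate m [gen_P, gen_Q])) = (P \<otimes>\<^bsub>G\<^esub> Q) [^]\<^bsub>G\<^esub> m"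
proof (induction m)
  case 0 then show ?case by (simp add: wc_Nil)
next
  case (Suc m)
  have "word_class RR (concat (replicate (Suc m) [gen_P, gen_Q])) =
        word_class RR ([gen_P] @ [gen_Q]) \<otimes>\<^bsub>G\<^esub> word_class RR (concat (replicate m [gen_P, gen_Q]))"
    by (simp add: wc_mult[symmetric])
  moreover have "word_class RR [gen_P, gen_Q] = P \<otimes>\<^bsub>G\<^esub> Q"
    using wc_mult[of "[gen_P]" "[gen_Q]"] by (simp add: wcP wcQ)
  ultimately show ?case using Suc by (metis G.nat_pow_Suc2 G.m_closed P_carrier Q_carrier append_Cons append_Nil)
qed

lemma PQ_pow_n: "(P \<otimes>\<^bsub>G\<^esub> Q) [^]\<^bsub>G\<^esub> n = \<one>\<^bsub>G\<^esub>"
proof -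
  have "word_class RR (concat (replicate n [gen_P, gen_Q])) = \<one>\<^bsub>G\<^esub>" by (rule wc_rel1) (simp add: C_relators_def)
  then show ?thesis by (simp add: wc_PQ_pow)
qed

lemma wc3: "word_class RR [x,y,z] = word_class RR [x] \<otimes>\<^bsub>G\<^esub> word_class RR [y] \<otimes>\<^bsub>G\<^esub> word_class RR [z]"
  using wc_mult[of "[x]" "[y]"] wc_mult[of "[x,y]" "[z]"] by simp

lemma PPQ: "P \<otimes>\<^bsub>G\<^esub> P \<otimes>\<^bsub>G\<^esub> Q = Q \<otimes>\<^bsub>G\<^esub> P \<otimes>\<^bsub>G\<^esub> P"
proof -
  have "word_class RR [gen_P, gen_P, gen_Q] = word_class RR [gen_Q, gen_P, gen_P]"
    by (rule wc_rel_eq) (simp add: C_relators_def)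
  then show ?thesis by (simp add: wc3 wcP wcQ)
qed

lemma PQQ: "P \<otimes>\<^bsub>G\<^esub> Q \<otimes>\<^bsub>G\<^esub> Q = Q \<otimes>\<^bsub>G\<^esub> Q \<otimes>\<^bsub>G\<^esub> P"
proof -
  have "word_class RR [gen_P, gen_Q, gen_Q] = word_class RR [gen_Q, gen_Q, gen_P]"
    by (rule wc_rel_eq) (simp add: C_relators_def)
  then show ?thesis by (simp add: wc3 wcP wcQ)
qed

lemma pow2: "y \<in> carrier G \<Longrightarrow> y [^]\<^bsub>G\<^esub> (2::nat) = y \<otimes>\<^bsub>G\<^esub> y"
  by (simp add: numeral_2_eq_2)

lemma even_pq:
  assumes nc: "P \<otimes>\<^bsub>G\<^esub> Q \<noteq> Q \<otimes>\<^bsub>G\<^esub> P"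
  shows "even p \<and> even q"
proof
  show "even p"
  proof (rule ccontr)
    assume "odd p"
    then obtain m where pm: "p = 2*m+1" by (metis oddE)
    have c2: "(P \<otimes>\<^bsub>G\<^esub> P) \<otimes>\<^bsub>G\<^esub> Q = Q \<otimes>\<^bsub>G\<^esub> (P \<otimes>\<^bsub>G\<^esub> P)" using PPQ by (simp add: G.m_assoc)
    have "P = P [^]\<^bsub>G\<^esub> p \<otimes>\<^bsub>G\<^esub> P" using P_pow_p by simp
    also have "\<dots> = P [^]\<^bsub>G\<^esub> (2 * (m+1))" by (simp add: pm)
    also have "\<dots> = (P [^]\<^bsub>G\<^esub> (2::nat)) [^]\<^bsub>G\<^esub> (m+1)" by (rule G.nat_pow_pow[symmetric]) simp
    also have "\<dots> = (P \<otimes>\<^bsub>G\<^esub> P) [^]\<^bsub>G\<^esub> (m+1)" by (simp only: pow2 P_carrier)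
    finally have Pe: "P = (P \<otimes>\<^bsub>G\<^esub> P) [^]\<^bsub>G\<^esub> (m+1)" .
    have "(P \<otimes>\<^bsub>G\<^esub> P) [^]\<^bsub>G\<^esub> (m+1) \<otimes>\<^bsub>G\<^esub> Q = Q \<otimes>\<^bsub>G\<^esub> (P \<otimes>\<^bsub>G\<^esub> P) [^]\<^bsub>G\<^esub> (m+1)"
      by (rule G.group_commutes_pow[OF c2]) auto
    with Pe nc show False by simp
  qed
next
  show "even q"
  proof (rule ccontr)
    assume "odd q"
    then obtain m where pm: "q = 2*m+1" by (metis oddE)
    have c2: "(Q \<otimes>\<^bsub>G\<^esub> Q) \<otimes>\<^bsub>G\<^esub> P = P \<otimes>\<^bsub>G\<^esub> (Q \<otimes>\<^bsub>G\<^esub> Q)" using PQQ by (simp add: G.m_assoc)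
    have "Q = Q [^]\<^bsub>G\<^esub> q \<otimes>\<^bsub>G\<^esub> Q" using Q_pow_q by simp
    also have "\<dots> = Q [^]\<^bsub>G\<^esub> (2 * (m+1))" by (simp add: pm)
    also have "\<dots> = (Q [^]\<^bsub>G\<^esub> (2::nat)) [^]\<^bsub>G\<^esub> (m+1)" by (rule G.nat_pow_pow[symmetric]) simp
    also have "\<dots> = (Q \<otimes>\<^bsub>G\<^esub> Q) [^]\<^bsub>G\<^esub> (m+1)" by (simp only: pow2 Q_carrier)
    finally have Qe: "Q = (Q \<otimes>\<^bsub>G\<^esub> Q) [^]\<^bsub>G\<^esub> (m+1)" .
    have "(Q \<otimes>\<^bsub>G\<^esub> Q) [^]\<^bsub>G\<^esub> (m+1) \<otimes>\<^bsub>G\<^esub> P = P \<otimes>\<^bsub>G\<^esub> (Q \<otimes>\<^bsub>G\<^esub> Q) [^]\<^bsub>G\<^esub> (m+1)"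
      by (rule G.group_commutes_pow[OF c2]) auto
    with Qe nc show False by simp
  qed
qed

end



sublocale cq \<subseteq> cg "2*A" "2*B" n .

context cq begin

abbreviation gmul (infixl "\<cdot>" 70) where "gmul u v \<equiv> u \<otimes>\<^bsub>G\<^esub> v"
abbreviation gipow (infixr "\<up>" 75) where "gipow u (i::int) \<equiv> u [^]\<^bsub>G\<^esub> i"
abbreviation ginv where "ginv u \<equiv> inv\<^bsub>G\<^esub> u"
abbreviation "e1 \<equiv> \<one>\<^bsub>G\<^esub>"
abbreviation "car \<equiv> carrier G"

lemma cancel1: "u \<in> car \<Longrightarrow> w \<in> car \<Longrightarrow> u \<cdot> (ginv u \<cdot> w) = w"
  by (simp add: G.m_assoc[symmetric])
lemma cancel2: "u \<in> car \<Longrightarrow> w \<in> car \<Longrightarrow> ginv u \<cdot> (u \<cdot> w) = w"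
  by (simp add: G.m_assoc[symmetric])

lemma comm_inv:
  assumes u: "u \<in> car" and v: "v \<in> car" and uv: "u \<cdot> v = v \<cdot> u"
  shows "ginv u \<cdot> v = v \<cdot> ginv u"
proof -
  have 1: "ginv u \<cdot> (u \<cdot> v) \<cdot> ginv u = v \<cdot> ginv u"
    using u v by (simp add: G.m_assoc[symmetric])
  have 2: "ginv u \<cdot> (v \<cdot> u) \<cdot> ginv u = ginv u \<cdot> v"
    using u v by (metis G.inv_closed G.m_assoc G.m_closed G.r_inv G.r_one)
  show ?thesis using 1 2 uv by simp
qed

lemma comm_int_pow:
  assumes u: "u \<in> car" and v: "v \<in> car" and uv: "u \<cdot> v = v \<cdot> u"
  shows "(u \<up> i) \<cdot> v = v \<cdot> (u \<up> i)"
proof -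
  have cn: "u [^]\<^bsub>G\<^esub> (m::nat) \<cdot> v = v \<cdot> u [^]\<^bsub>G\<^esub> m" for m
    by (rule G.group_commutes_pow[OF uv u v])
  show ?thesis
  proof (cases "i < 0")
    case True
    define m where "m = nat (-i)"
    have i: "i = - int m" using True by (simp add: m_def)
    have "u \<up> i = ginv (u [^]\<^bsub>G\<^esub> m)" unfolding i by (rule G.int_pow_neg_int[OF u])
    then show ?thesis using comm_inv[OF G.nat_pow_closed[OF u] v cn] by simp
  next
    case False
    define m where "m = nat i"
    have i: "i = int m" using False by (simp add: m_def)
    have "u \<up> i = u [^]\<^bsub>G\<^esub> m" unfolding i by (rule int_pow_int)
    then show ?thesis using cn by simp
  qed
qed

definition central where "central z \<longleftrightarrow> z \<in> car \<and> (\<forall>y\<in>car. z \<cdot> y = y \<cdot> z)"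

lemma central_pow: "central z \<Longrightarrow> central (z \<up> i)"
proof -
  assume "central z"
  then have z: "z \<in> car" "\<And>y. y \<in> car \<Longrightarrow> z \<cdot> y = y \<cdot> z" by (auto simp: central_def)
  have "z \<up> i \<cdot> y = y \<cdot> z \<up> i" if "y \<in> car" for y
    by (rule comm_int_pow[OF z(1) that z(2)[OF that]])
  then show "central (z \<up> i)" using z by (simp add: central_def)
qed

lemma central_mult: assumes "central z" "central w" shows "central (z \<cdot> w)"
proof -
  have z: "z \<in> car" "\<And>y. y \<in> car \<Longrightarrow> z \<cdot> y = y \<cdot> z" using assms(1) by (auto simp: central_def)
  have w: "w \<in> car" "\<And>y. y \<in> car \<Longrightarrow> w \<cdot> y = y \<cdot> w" using assms(2) by (auto simp: central_def)
  have "z \<cdot> w \<cdot> y = y \<cdot> (z \<cdot> w)" if y: "y \<in> car" for y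
  proof -
    have "z \<cdot> w \<cdot> y = z \<cdot> (w \<cdot> y)" using z(1) w(1) y by (simp add: G.m_assoc)
    also have "\<dots> = z \<cdot> (y \<cdot> w)" using w(2)[OF y] by simp
    also have "\<dots> = (z \<cdot> y) \<cdot> w" using z(1) w(1) y by (simp add: G.m_assoc)
    also have "\<dots> = (y \<cdot> z) \<cdot> w" using z(2)[OF y] by simp
    also have "\<dots> = y \<cdot> (z \<cdot> w)" using z(1) w(1) y by (simp add: G.m_assoc)
    finally show ?thesis .
  qed
  moreover have "z \<cdot> w \<in> car" using z(1) w(1) by simp
  ultimately show ?thesis unfolding central_def by blast
qed

lemma letter_cases: "word_class RR [l] \<in> {P, Q, ginv P, ginv Q}"
proof -
  obtain g i where l: "l = (g,i)" by (cases l)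
  have "l = gen_P \<or> l = gen_Q \<or> l = inv_letter gen_P \<or> l = inv_letter gen_Q"
    by (cases g; cases i) (auto simp: l gen_P_def gen_Q_def inv_letter_def)
  then show ?thesis
    using wc_inv_letter[of RR gen_P] wc_inv_letter[of RR gen_Q]
    by (auto simp: wcP wcQ C_group_def)
qed

lemma central_gen:
  assumes z: "z \<in> car" and zP: "z \<cdot> P = P \<cdot> z" and zQ: "z \<cdot> Q = Q \<cdot> z"
  shows "central z"
proof -
  have gens: "z \<cdot> word_class RR [l] = word_class RR [l] \<cdot> z" for l
    using letter_cases[of l] zP zQ comm_inv[OF P_carrier z] comm_inv[OF Q_carrier z] z
    by auto
  have "z \<cdot> word_class RR w = word_class RR w \<cdot> z" for w
  proof (induction w)
    case Nil then show ?case using z by (simp add: wc_Nil)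
  next
    case (Cons l w)
    have "word_class RR (l # w) = word_class RR [l] \<cdot> word_class RR w"
      using wc_mult[of "[l]" w] by simp
    moreover have "word_class RR [l] \<in> car" "word_class RR w \<in> car" by (simp_all add: C_group_def)
    ultimately show ?case using Cons gens[of l] z
      by (simp add: G.m_assoc) (metis G.m_assoc)
  qed
  then show ?thesis using z by (auto simp: central_def C_group_def pg_carrier)
qed

abbreviation "a \<equiv> P \<cdot> P"
abbreviation "b \<equiv> Q \<cdot> Q"
abbreviation "x \<equiv> P \<cdot> Q"
abbreviation "c \<equiv> a \<cdot> b"

lemma a_central: "central a"
  by (rule central_gen) (simp_all add: G.m_assoc PPQ[simplified G.m_assoc P_carrier Q_carrier])

lemma b_central: "central b"
  by (rule central_gen) (simp_all add: G.m_assoc PQQ[simplified G.m_assoc P_carrier Q_carrier, symmetric])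

lemma c_central: "central c"
  by (rule central_mult[OF a_central b_central])

lemma [simp]: "a \<in> car" "b \<in> car" "x \<in> car" "c \<in> car"
  by simp_all

lemma P_x: "P \<cdot> x = c \<cdot> ginv x \<cdot> P"
proof -
  have "c \<cdot> ginv x \<cdot> P = P \<cdot> P \<cdot> (Q \<cdot> (Q \<cdot> (ginv Q \<cdot> (ginv P \<cdot> P))))"
    by (simp add: G.m_assoc G.inv_mult_group)
  also have "\<dots> = P \<cdot> (P \<cdot> Q)"
    by (simp add: cancel1 G.m_assoc)
  finally show ?thesis by simp
qed

definition hc where "hc y = P \<cdot> y \<cdot> ginv P"

lemma hc_hom: "hc \<in> hom G G"
  unfolding hom_def hc_def
  by (auto simp: G.m_assoc cancel2)

lemma K: "P \<cdot> x \<up> k = c \<up> k \<cdot> x \<up> (-k) \<cdot> P"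
proof -
  have hx: "hc x = c \<cdot> ginv x"
    unfolding hc_def P_x by (simp add: G.m_assoc)
  have "hc (x \<up> k) = (hc x) \<up> k"
    by (rule hom_int_pow[OF hc_hom]) (simp_all add: G.is_group)
  also have "\<dots> = c \<up> k \<cdot> (ginv x) \<up> k"
    unfolding hx
    by (rule G.int_pow_mult_distrib) (use c_central in \<open>auto simp: central_def\<close>)
  also have "\<dots> = c \<up> k \<cdot> x \<up> (-k)"
    by (simp add: G.int_pow_inv G.int_pow_neg)
  finally have "hc (x \<up> k) = c \<up> k \<cdot> x \<up> (-k)" .
  then show ?thesis unfolding hc_def
    by (metis G.inv_closed G.int_pow_closed G.inv_solve_right' G.m_closed P_carrier Q_carrier)
qed

end



context cq begin

lemma centralD: "central z \<Longrightarrow> y \<in> car \<Longrightarrow> z \<cdot> y = y \<cdot> z"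
  by (simp add: central_def)
lemma centralC: "central z \<Longrightarrow> z \<in> car"
  by (simp add: central_def)

definition sA where "sA i j = a \<up> i \<cdot> b \<up> j"
definition Ax where "Ax i j k = sA i j \<cdot> x \<up> k"
definition E :: "tt \<Rightarrow> word set" where
  "E t = (case t of (i,j,k,e) \<Rightarrow> Ax i j k \<cdot> (if e then P else e1))"

lemma sA_central: "central (sA i j)"
  unfolding sA_def by (intro central_mult central_pow a_central b_central)

lemma sA_carrier[simp]: "sA i j \<in> car" using centralC[OF sA_central] .
lemma Ax_carrier[simp]: "Ax i j k \<in> car" by (simp add: Ax_def)
lemma E_carrier[simp]: "E t \<in> car" by (cases t) (simp add: E_def)

lemma sA_mult: "sA i j \<cdot> sA i' j' = sA (i+i') (j+j')"
proof -
  have "sA i j \<cdot> sA i' j' = a \<up> i \<cdot> (b \<up> j \<cdot> a \<up> i') \<cdot> b \<up> j'"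
    by (simp add: sA_def G.m_assoc)
  also have "b \<up> j \<cdot> a \<up> i' = a \<up> i' \<cdot> b \<up> j"
    by (rule centralD[OF central_pow[OF b_central]]) simp
  also have "a \<up> i \<cdot> (a \<up> i' \<cdot> b \<up> j) \<cdot> b \<up> j' = (a \<up> i \<cdot> a \<up> i') \<cdot> (b \<up> j \<cdot> b \<up> j')"
    by (simp add: G.m_assoc)
  also have "\<dots> = sA (i+i') (j+j')"
    by (simp add: sA_def G.int_pow_mult)
  finally show ?thesis .
qed

lemma c_pow: "c \<up> k = sA k k"
  unfolding sA_def
  by (rule G.int_pow_mult_distrib) (use centralD[OF a_central, of b] in auto)

lemma Ax_mult: "Ax i j k \<cdot> Ax i' j' k' = Ax (i+i') (j+j') (k+k')"
proof -
  have "Ax i j k \<cdot> Ax i' j' k' = sA i j \<cdot> (x \<up> k \<cdot> sA i' j') \<cdot> x \<up> k'"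
    by (simp add: Ax_def G.m_assoc)
  also have "x \<up> k \<cdot> sA i' j' = sA i' j' \<cdot> x \<up> k"
    by (rule centralD[OF sA_central, symmetric]) simp
  also have "sA i j \<cdot> (sA i' j' \<cdot> x \<up> k) \<cdot> x \<up> k' = (sA i j \<cdot> sA i' j') \<cdot> (x \<up> k \<cdot> x \<up> k')"
    by (simp add: G.m_assoc)
  also have "\<dots> = Ax (i+i') (j+j') (k+k')"
    by (simp add: Ax_def sA_mult G.int_pow_mult)
  finally show ?thesis .
qed

lemma P_Ax: "P \<cdot> Ax i j k = Ax (i+k) (j+k) (-k) \<cdot> P"
proof -
  have "P \<cdot> Ax i j k = (P \<cdot> sA i j) \<cdot> x \<up> k"
    by (simp add: Ax_def G.m_assoc)
  also have "P \<cdot> sA i j = sA i j \<cdot> P"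
    by (rule centralD[OF sA_central, symmetric]) simp
  also have "sA i j \<cdot> P \<cdot> x \<up> k = sA i j \<cdot> (P \<cdot> x \<up> k)"
    by (simp add: G.m_assoc)
  also have "P \<cdot> x \<up> k = c \<up> k \<cdot> x \<up> (-k) \<cdot> P" by (rule K)
  also have "sA i j \<cdot> (c \<up> k \<cdot> x \<up> (-k) \<cdot> P) = (sA i j \<cdot> c \<up> k) \<cdot> x \<up> (-k) \<cdot> P"
    by (simp add: G.m_assoc)
  also have "\<dots> = Ax (i+k) (j+k) (-k) \<cdot> P"
    by (simp add: c_pow sA_mult Ax_def)
  finally show ?thesis .
qed

lemma a_Ax: "a = Ax 1 0 0"
  by (simp add: Ax_def sA_def)

lemma E_mult: "E s \<cdot> E t = E (tmul s t)"
proof -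
  obtain i j k e where s: "s = (i,j,k,e)" by (cases s)
  obtain i' j' k' e' where t: "t = (i',j',k',e')" by (cases t)
  show ?thesis
  proof (cases e)
    case False
    have "E s \<cdot> E t = (Ax i j k \<cdot> Ax i' j' k') \<cdot> (if e' then P else e1)"
      by (simp add: s t E_def False G.m_assoc)
    then show ?thesis by (simp add: Ax_mult s t False E_def)
  next
    case True
    have "E s \<cdot> E t = Ax i j k \<cdot> (P \<cdot> Ax i' j' k') \<cdot> (if e' then P else e1)"
      by (simp add: s t E_def True G.m_assoc)
    also have "\<dots> = (Ax i j k \<cdot> Ax (i'+k') (j'+k') (-k')) \<cdot> (P \<cdot> (if e' then P else e1))"
      by (simp add: P_Ax G.m_assoc)
    also have "\<dots> = Ax (i+(i'+k')) (j+(j'+k')) (k+(-k')) \<cdot> (P \<cdot> (if e' then P else e1))"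
      by (simp add: Ax_mult)
    finally have 1: "E s \<cdot> E t = Ax (i+(i'+k')) (j+(j'+k')) (k+(-k')) \<cdot> (P \<cdot> (if e' then P else e1))" .
    show ?thesis
    proof (cases e')
      case True
      have "E s \<cdot> E t = Ax (i+(i'+k')) (j+(j'+k')) (k+(-k')) \<cdot> Ax 1 0 0"
        using 1 True a_Ax by simp
      also have "\<dots> = Ax (i+i'+k'+1) (j+j'+k') (k-k')"
        unfolding Ax_mult by (simp add: algebra_simps)
      finally show ?thesis using \<open>e\<close> True by (simp add: s t E_def)
    next
      case False
      have "E s \<cdot> E t = Ax (i+i'+k') (j+j'+k') (k-k') \<cdot> P"
      proof -
        have "Ax (i+(i'+k')) (j+(j'+k')) (k+(-k')) = Ax (i+i'+k') (j+j'+k') (k-k')"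
          by (simp add: add.assoc)
        then show ?thesis using 1 False by simp
      qed
      then show ?thesis using \<open>e\<close> False by (simp add: s t E_def)
    qed
  qed
qed

lemma E_one: "E (0,0,0,False) = e1" by (simp add: E_def Ax_def sA_def)
lemma E_P: "E (0,0,0,True) = P" by (simp add: E_def Ax_def sA_def)
lemma E_tone: "E tone = e1" by (simp add: tone_def E_one)

lemma E_Q: "E (0,1,-1,True) = Q"
proof -
  have "E (0,1,-1,True) = b \<cdot> ginv x \<cdot> P"
    by (simp add: E_def Ax_def sA_def G.int_pow_neg)
  also have "\<dots> = Q \<cdot> (Q \<cdot> (ginv Q \<cdot> (ginv P \<cdot> P)))"
    by (simp add: G.m_assoc G.inv_mult_group)
  also have "\<dots> = Q" by (simp add: cancel1)
  finally show ?thesis .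
qed

lemma E_invP: "E (-1,0,0,True) = ginv P"
proof -
  have "E (-1,0,0,True) \<cdot> P = e1"
    using E_mult[of "(-1,0,0,True)" "(0,0,0,True)"] by (simp add: E_P E_one)
  then show ?thesis by (intro G.inv_equality[symmetric]) auto
qed

lemma E_invQ: "E (0,0,-1,True) = ginv Q"
proof -
  have "E (0,0,-1,True) \<cdot> Q = e1"
    using E_mult[of "(0,0,-1,True)" "(0,1,-1,True)"] by (simp add: E_Q E_one)
  then show ?thesis by (intro G.inv_equality[symmetric]) auto
qed

lemma E_evl: "E (evl l) = word_class RR [l]"
proof -
  obtain g i where l: "l = (g,i)" by (cases l)
  have "l = gen_P \<or> l = gen_Q \<or> l = inv_letter gen_P \<or> l = inv_letter gen_Q"
    by (cases g; cases i) (auto simp: l gen_P_def gen_Q_def inv_letter_def)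
  then show ?thesis
  proof (elim disjE)
    assume "l = gen_P" then show ?thesis
      using E_P wcP by (simp add: evl_def gen_P_def)
  next
    assume "l = gen_Q" then show ?thesis
      using E_Q wcQ by (simp add: evl_def gen_Q_def)
  next
    assume l: "l = inv_letter gen_P"
    have "word_class RR [l] = ginv P" using wc_inv_letter[of RR gen_P] by (simp add: l wcP C_group_def)
    moreover have "evl l = (-1,0,0,True)" by (simp add: l evl_def gen_P_def inv_letter_def)
    ultimately show ?thesis using E_invP by simp
  next
    assume l: "l = inv_letter gen_Q"
    have "word_class RR [l] = ginv Q" using wc_inv_letter[of RR gen_Q] by (simp add: l wcQ C_group_def)
    moreover have "evl l = (0,0,-1,True)" by (simp add: l evl_def gen_Q_def inv_letter_def)
    ultimately show ?thesis using E_invQ by simp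
  qed
qed

lemma wc_E: "word_class RR w = E (evalw w)"
proof (induction w)
  case Nil then show ?case by (simp add: wc_Nil E_tone)
next
  case (Cons l w)
  have "word_class RR (l # w) = word_class RR [l] \<cdot> word_class RR w"
    using wc_mult[of "[l]" w] by simp
  then show ?case using Cons by (simp add: E_evl[symmetric] E_mult)
qed

lemma car_E: "car = range E"
proof
  show "car \<subseteq> range E"
    using wc_E by (auto simp: C_group_def pg_carrier)
  show "range E \<subseteq> car" by auto
qed

end



context cq begin

lemma a_pow2: "P [^]\<^bsub>G\<^esub> (2::nat) = a" by (simp add: pow2)
lemma b_pow2: "Q [^]\<^bsub>G\<^esub> (2::nat) = b" by (simp add: pow2)

lemma aA: "a \<up> int A = e1"
proof -
  have "a \<up> int A = (P [^]\<^bsub>G\<^esub> (2::nat)) [^]\<^bsub>G\<^esub> A" by (simp add: int_pow_int a_pow2)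
  also have "\<dots> = P [^]\<^bsub>G\<^esub> (2*A)" by (simp add: G.nat_pow_pow)
  also have "\<dots> = e1" by (rule P_pow_p)
  finally show ?thesis .
qed

lemma bB: "b \<up> int B = e1"
proof -
  have "b \<up> int B = (Q [^]\<^bsub>G\<^esub> (2::nat)) [^]\<^bsub>G\<^esub> B" by (simp add: int_pow_int b_pow2)
  also have "\<dots> = Q [^]\<^bsub>G\<^esub> (2*B)" by (simp add: G.nat_pow_pow)
  also have "\<dots> = e1" by (rule Q_pow_q)
  finally show ?thesis .
qed

lemma xn: "x \<up> int n = e1"
  using PQ_pow_n by (simp add: int_pow_int)

lemma cn: "c \<up> int n = e1"
proof -
  have "P \<cdot> x \<up> int n = c \<up> int n \<cdot> x \<up> (- int n) \<cdot> P" by (rule K)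
  moreover have "x \<up> (- int n) = e1" using xn by (simp add: G.int_pow_neg)
  ultimately have "e1 \<cdot> P = c \<up> int n \<cdot> P" using xn by simp
  then have "c \<up> int n \<cdot> P = e1 \<cdot> P" by simp
  then show ?thesis by (subst (asm) G.right_cancel) auto
qed

lemma pow_e1: "u \<in> car \<Longrightarrow> u \<up> m = e1 \<Longrightarrow> u \<up> (m * k) = e1"
  by (metis G.int_pow_one G.int_pow_pow)

lemma sA_L: "(u,v) \<in> Lset \<Longrightarrow> sA u v = e1"
proof -
  assume "(u,v) \<in> Lset"
  then obtain al be de where u: "u = al * int A + de * int n" and v: "v = be * int B + de * int n"
    by (auto simp: Lset_def)
  have 1: "sA (int A * al) 0 = e1" using pow_e1[OF _ aA] by (simp add: sA_def)
  have 2: "sA 0 (int B * be) = e1" using pow_e1[OF _ bB] by (simp add: sA_def)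
  have 3: "sA (int n * de) (int n * de) = e1" using pow_e1[OF _ cn] by (simp add: c_pow[symmetric])
  have u': "u = int A * al + int n * de" by (simp add: u mult.commute)
  have v': "v = int B * be + int n * de" by (simp add: v mult.commute)
  have "sA u v = sA (int A * al) 0 \<cdot> sA 0 (int B * be) \<cdot> sA (int n * de) (int n * de)"
    by (simp add: sA_mult u' v')
  then show ?thesis using 1 2 3 by simp
qed

lemma E_teq: "teq s t \<Longrightarrow> E s = E t"
proof -
  assume st: "teq s t"
  obtain i j k e where s: "s = (i,j,k,e)" by (cases s)
  obtain i' j' k' e' where t: "t = (i',j',k',e')" by (cases t)
  from st have e: "e = e'" and kk: "int n dvd (k - k')" and L: "(i - i', j - j') \<in> Lset"
    by (auto simp: s t teq_def)
  obtain gam where gam: "k - k' = int n * gam" using kk by (auto elim: dvdE)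
  have "tmul (i - i', j - j', k - k', False) t = s" by (simp add: s t e)
  then have "E s = E (i - i', j - j', k - k', False) \<cdot> E t" by (simp add: E_mult)
  moreover have "E (i - i', j - j', k - k', False) = e1"
    using sA_L[OF L] pow_e1[OF _ xn, of gam] by (simp add: E_def Ax_def gam)
  ultimately show ?thesis by simp
qed

lemma evl_P: "evl gen_P = (0,0,0,True)" by (simp add: evl_def gen_P_def)

definition nfw :: "tt \<Rightarrow> word" where
  "nfw t = (case t of (i,j,k,e) \<Rightarrow> replicate (2 * nat i) gen_P @ replicate (2 * nat j) gen_Q @
     concat (replicate (nat k) [gen_P, gen_Q]) @ (if e then [gen_P] else []))"

lemma evalw_nfw: "0 \<le> i \<Longrightarrow> 0 \<le> j \<Longrightarrow> 0 \<le> k \<Longrightarrow> evalw (nfw (i,j,k,e)) = (i,j,k,e)"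
  by (simp add: nfw_def evalw_append evalw_P2 evalw_Q2 evalw_PQ evl_P tone_def)

lemma E_inj: "s \<in> NF \<Longrightarrow> t \<in> NF \<Longrightarrow> E s = E t \<Longrightarrow> s = t"
proof -
  assume s: "s \<in> NF" and t: "t \<in> NF" and st: "E s = E t"
  have es: "evalw (nfw s) = s" using s by (auto simp: NF_def intro!: evalw_nfw)
  have et: "evalw (nfw t) = t" using t by (auto simp: NF_def intro!: evalw_nfw)
  have "word_class RR (nfw s) = word_class RR (nfw t)" using st by (simp add: wc_E es et)
  then have "pres_eq RR (nfw s) (nfw t)" by (simp add: word_class_eq_iff)
  then have "teq s t" using pres_eq_teq es et by fastforce
  then show "s = t" using NF_teq s t by blast
qed

lemma E_red: "E (red t) = E t"
  using E_teq[OF teq_red[of t]] by simp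

lemma car_NF: "car = E ` NF"
proof
  show "car \<subseteq> E ` NF"
  proof
    fix y0 assume "y0 \<in> car"
    then obtain t where "y0 = E t" using car_E by auto
    then have "y0 = E (red t)" by (simp add: E_red)
    then show "y0 \<in> E ` NF" using red_NF by blast
  qed
  show "E ` NF \<subseteq> car" by auto
qed

lemma inj_E: "inj_on E NF"
  by (auto intro: inj_onI E_inj)

lemma card_car: "card car = Ag * g * n * 2"
  using card_image[OF inj_E] car_NF card_NF by simp

end



lemma dihedral_group:
  assumes n: "n > 0"
  shows "group (dihedral_group n)"
proof (rule groupI)
  let ?D = "dihedral_group n"
  have m: "(a, s) \<otimes>\<^bsub>?D\<^esub> (b, t) = ((a + (if s then - b else b)) mod int n, s \<noteq> t)" for a s b t
    by (simp add: dihedral_group_def)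
  have c: "carrier ?D = {0..<int n} \<times> UNIV" by (simp add: dihedral_group_def)
  show "\<And>x y. x \<in> carrier ?D \<Longrightarrow> y \<in> carrier ?D \<Longrightarrow> x \<otimes>\<^bsub>?D\<^esub> y \<in> carrier ?D"
    using n by (auto simp: c m)
  show "\<one>\<^bsub>?D\<^esub> \<in> carrier ?D" using n by (simp add: dihedral_group_def)
  show "\<And>x y z. x \<in> carrier ?D \<Longrightarrow> y \<in> carrier ?D \<Longrightarrow> z \<in> carrier ?D \<Longrightarrow>
          x \<otimes>\<^bsub>?D\<^esub> y \<otimes>\<^bsub>?D\<^esub> z = x \<otimes>\<^bsub>?D\<^esub> (y \<otimes>\<^bsub>?D\<^esub> z)"
  proof -
    fix x y z assume "x \<in> carrier ?D" "y \<in> carrier ?D" "z \<in> carrier ?D"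
    obtain a s where x: "x = (a,s)" by (cases x)
    obtain b t where y: "y = (b,t)" by (cases y)
    obtain d u where z: "z = (d,u)" by (cases z)
    show "x \<otimes>\<^bsub>?D\<^esub> y \<otimes>\<^bsub>?D\<^esub> z = x \<otimes>\<^bsub>?D\<^esub> (y \<otimes>\<^bsub>?D\<^esub> z)"
      unfolding x y z m
      by (cases s; cases t; cases u)
         (simp_all add: mod_add_left_eq mod_add_right_eq mod_diff_left_eq mod_diff_right_eq
            algebra_simps flip: diff_conv_add_uminus)
  qed
  show "\<And>x. x \<in> carrier ?D \<Longrightarrow> \<one>\<^bsub>?D\<^esub> \<otimes>\<^bsub>?D\<^esub> x = x"
    by (auto simp: dihedral_group_def)
  show "\<And>x. x \<in> carrier ?D \<Longrightarrow> \<exists>y\<in>carrier ?D. y \<otimes>\<^bsub>?D\<^esub> x = \<one>\<^bsub>?D\<^esub>"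
  proof -
    fix x assume xc: "x \<in> carrier ?D"
    obtain a s where x: "x = (a,s)" by (cases x)
    show "\<exists>y\<in>carrier ?D. y \<otimes>\<^bsub>?D\<^esub> x = \<one>\<^bsub>?D\<^esub>"
    proof (cases s)
      case True
      then show ?thesis using xc by (intro bexI[of _ x]) (auto simp: x dihedral_group_def)
    next
      case False
      then show ?thesis using xc n
        by (intro bexI[of _ "((- a) mod int n, False)"]) (auto simp: x dihedral_group_def mod_add_left_eq)
    qed
  qed
qed

context cq begin

abbreviation "S0 \<equiv> generate G {P [^]\<^bsub>G\<^esub> (2::nat), Q [^]\<^bsub>G\<^esub> (2::nat)}"

lemma E_sA: "E (u,v,0,False) = sA u v" by (simp add: E_def Ax_def)

lemma gen_sA: "h \<in> S0 \<Longrightarrow> \<exists>u v. h = sA u v"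
proof (induction rule: generate.induct)
  case one then show ?case by (rule exI[of _ 0], rule exI[of _ 0]) (simp add: sA_def)
next
  case (incl h)
  then have "h = sA 1 0 \<or> h = sA 0 1" by (auto simp: sA_def a_pow2 b_pow2)
  then show ?case by blast
next
  case (inv h)
  then have "h = sA 1 0 \<or> h = sA 0 1" by (auto simp: sA_def a_pow2 b_pow2)
  then show ?case
  proof
    assume h: "h = sA 1 0"
    have "sA (-1) 0 \<cdot> h = e1" by (simp add: h sA_mult) (simp add: sA_def)
    then have "ginv h = sA (-1) 0" by (intro G.inv_equality) (auto simp: h)
    then show ?case by blast
  next
    assume h: "h = sA 0 1"
    have "sA 0 (-1) \<cdot> h = e1" by (simp add: h sA_mult) (simp add: sA_def)
    then have "ginv h = sA 0 (-1)" by (intro G.inv_equality) (auto simp: h)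
    then show ?case by blast
  qed
next
  case (eng h1 h2)
  then show ?case using sA_mult by blast
qed

lemma gens_car: "{P [^]\<^bsub>G\<^esub> (2::nat), Q [^]\<^bsub>G\<^esub> (2::nat)} \<subseteq> car" by simp

lemma S0_sub: "subgroup S0 G" by (rule G.generate_is_subgroup[OF gens_car])

lemma S0_eq: "S0 = E ` NF0"
proof
  show "S0 \<subseteq> E ` NF0"
  proof
    fix h assume "h \<in> S0"
    then obtain u v where h: "h = sA u v" using gen_sA by blast
    then have "h = E (red (u,v,0,False))" by (simp add: E_red E_sA)
    then show "h \<in> E ` NF0" using red_0 by blast
  qed
  show "E ` NF0 \<subseteq> S0"
  proof
    fix h assume "h \<in> E ` NF0"
    then obtain u v where h: "h = E (u,v,0,False)" by (auto simp: NF0_def)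
    have "a \<in> S0" using generate.incl[of a "{P [^]\<^bsub>G\<^esub> (2::nat), Q [^]\<^bsub>G\<^esub> (2::nat)}" G]
      by (simp add: a_pow2)
    moreover have "b \<in> S0" using generate.incl[of b "{P [^]\<^bsub>G\<^esub> (2::nat), Q [^]\<^bsub>G\<^esub> (2::nat)}" G]
      by (simp add: b_pow2)
    ultimately have "a \<up> u \<in> S0" "b \<up> v \<in> S0"
      using G.subgroup_int_pow_closed[OF S0_sub] by auto
    then show "h \<in> S0" by (simp add: h E_sA sA_def subgroup.m_closed[OF S0_sub])
  qed
qed

lemma S0_central: "s \<in> S0 \<Longrightarrow> y \<in> car \<Longrightarrow> s \<cdot> y = y \<cdot> s"
  using gen_sA centralD[OF sA_central] by blast

lemma S0_comm: "comm_group (G\<lparr>carrier := S0\<rparr>)"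
proof -
  interpret H: group "G\<lparr>carrier := S0\<rparr>" by (rule subgroup.subgroup_is_group[OF S0_sub G.is_group])
  show ?thesis
    by (rule H.group_comm_groupI) (use S0_central subgroup.mem_carrier[OF S0_sub] in auto)
qed

lemma card_S0: "card S0 = Ag * g"
  using card_image[OF inj_on_subset[OF inj_E NF0_sub]] S0_eq card_NF0 by simp

abbreviation "D \<equiv> dihedral_group n"

definition proj :: "tt \<Rightarrow> int \<times> bool" where
  "proj t = (case t of (i,j,k,e) \<Rightarrow> (k mod int n, e))"

definition hD where "hD Z1 = proj (SOME t. t \<in> NF \<and> E t = Z1)"

lemma proj_red: "proj (red t) = proj t"
  by (cases t) (simp add: proj_def red_def)

lemma hD_E: "hD (E t) = proj t"
proof -
  have ex: "\<exists>t'. t' \<in> NF \<and> E t' = E t" using red_NF E_red by blast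
  define t0 where "t0 = (SOME t'. t' \<in> NF \<and> E t' = E t)"
  have t0: "t0 \<in> NF" "E t0 = E t" using someI_ex[OF ex] by (simp_all add: t0_def)
  have "t0 = red t" using E_inj[OF t0(1) red_NF] t0(2) E_red by simp
  then show ?thesis using proj_red by (simp add: hD_def t0_def[symmetric])
qed

lemma proj_mult: "proj (tmul s t) = proj s \<otimes>\<^bsub>D\<^esub> proj t"
proof -
  obtain i j k e where s: "s = (i,j,k,e)" by (cases s)
  obtain i' j' k' e' where t: "t = (i',j',k',e')" by (cases t)
  show ?thesis
    by (cases e) (simp_all add: s t proj_def dihedral_group_def mod_add_eq mod_diff_eq
            flip: diff_conv_add_uminus)
qed

lemma hD_hom: "hD \<in> hom G D"
proof -
  have "hD Z1 \<in> carrier D" if "Z1 \<in> car" for Z1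
  proof -
    obtain t where "Z1 = E t" using car_E \<open>Z1 \<in> car\<close> by auto
    then show ?thesis using n_pos by (cases t) (simp add: hD_E proj_def dihedral_group_def)
  qed
  moreover have "hD (Z1 \<cdot> Z2) = hD Z1 \<otimes>\<^bsub>D\<^esub> hD Z2" if "Z1 \<in> car" "Z2 \<in> car" for Z1 Z2
  proof -
    obtain s where s: "Z1 = E s" using car_E \<open>Z1 \<in> car\<close> by auto
    obtain t where t: "Z2 = E t" using car_E \<open>Z2 \<in> car\<close> by auto
    show ?thesis by (simp add: s t E_mult hD_E proj_mult)
  qed
  ultimately show ?thesis by (auto simp: hom_def)
qed

lemma hD_group_hom: "group_hom G D hD"
  unfolding group_hom_def group_hom_axioms_def
  using G.is_group dihedral_group[OF n_pos] hD_hom by simp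

lemma hD_surj: "hD ` car = carrier D"
proof
  show "hD ` car \<subseteq> carrier D" using hD_hom by (auto simp: hom_def)
  show "carrier D \<subseteq> hD ` car"
  proof
    fix y assume "y \<in> carrier D"
    then obtain k e where y: "y = (k,e)" and k: "0 \<le> k" "k < int n" by (auto simp: dihedral_group_def)
    have "hD (E (0,0,k,e)) = y" using k by (simp add: hD_E proj_def y)
    then show "y \<in> hD ` car" by (metis E_carrier image_eqI)
  qed
qed

lemma kernel_hD: "kernel G D hD = S0"
proof -
  have "Z1 \<in> kernel G D hD \<longleftrightarrow> Z1 \<in> S0" if Z1: "Z1 \<in> car" for Z1
  proof -
    obtain t where t: "t \<in> NF" "Z1 = E t" using car_NF Z1 by auto
    obtain i j k e where tt: "t = (i,j,k,e)" by (cases t)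
    have k: "0 \<le> k" "k < int n" using t(1) by (auto simp: tt NF_def)
    have "Z1 \<in> kernel G D hD \<longleftrightarrow> k = 0 \<and> e = False"
      using Z1 k by (simp add: kernel_def t(2) hD_E proj_def tt dihedral_group_def)
    also have "\<dots> \<longleftrightarrow> t \<in> NF0" using t(1) by (auto simp: tt NF0_def NF_def)
    also have "\<dots> \<longleftrightarrow> Z1 \<in> S0"
      using E_inj[OF t(1)] NF0_sub by (auto simp: S0_eq t(2))
    finally show ?thesis .
  qed
  moreover have "kernel G D hD \<subseteq> car" by (auto simp: kernel_def)
  moreover have "S0 \<subseteq> car" using subgroup.subset[OF S0_sub] .
  ultimately show ?thesis by blast
qed

lemma quotient_iso: "G Mod S0 \<cong> D"
  using group_hom.FactGroup_iso[OF hD_group_hom hD_surj] kernel_hD by simp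

end




context cq begin

lemma p'_eq: "gcd (2*A) (lcm (2*B) (2*n)) = 2 * Ag"
  by (simp add: Ag_def lcm_mult_left gcd_mult_left)

lemma q'_eq: "gcd (2*B) (lcm (2*A) (2*n)) = 2 * Bg"
  by (simp add: Bg_def lcm_mult_left gcd_mult_left)

lemma gq'_eq: "gcd (gcd (2*B) (lcm (2*A) (2*n))) (2*n) = 2 * g"
proof -
  have "gcd (lcm A n) n = n" by simp
  then have "gcd Bg n = g" by (simp add: Bg_def g_def gcd.assoc)
  then show ?thesis by (simp add: q'_eq gcd_mult_left)
qed

lemma main_cq:
  assumes nc: "P \<otimes>\<^bsub>G\<^esub> Q \<noteq> Q \<otimes>\<^bsub>G\<^esub> P"
  shows "even (2*A) \<and> even (2*B) \<and> P [^]\<^bsub>G\<^esub> (2 * n) \<otimes>\<^bsub>G\<^esub> Q [^]\<^bsub>G\<^esub> (2 * n) = \<one>\<^bsub>G\<^esub>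
    \<and> P [^]\<^bsub>G\<^esub> (gcd (2*A) (lcm (2*B) (2 * n))) = \<one>\<^bsub>G\<^esub>
    \<and> Q [^]\<^bsub>G\<^esub> (gcd (2*B) (lcm (2*A) (2 * n))) = \<one>\<^bsub>G\<^esub>
    \<and> \<not> (gcd (2*A) (lcm (2*B) (2 * n)) mod 4 = 2 \<and> gcd (2*B) (lcm (2*A) (2 * n)) mod 4 = 2 \<and> n = 2)
    \<and> 2 * order G = gcd (2*A) (lcm (2*B) (2 * n)) * gcd (gcd (2*B) (lcm (2*A) (2 * n))) (2 * n) * n
    \<and> comm_group (G\<lparr>carrier := S0\<rparr>)
    \<and> (\<forall>s\<in>S0. \<forall>y\<in>carrier G. s \<otimes>\<^bsub>G\<^esub> y = y \<otimes>\<^bsub>G\<^esub> s)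
    \<and> 4 * card S0 = gcd (2*A) (lcm (2*B) (2 * n)) * gcd (gcd (2*B) (lcm (2*A) (2 * n))) (2 * n)
    \<and> G Mod S0 \<cong> dihedral_group n"
proof (intro conjI)
  show "even (2*A)" by simp
next
  show "even (2*B)" by simp
next
  have "P [^]\<^bsub>G\<^esub> (2 * n) = a \<up> int n"
  proof -
    have "P [^]\<^bsub>G\<^esub> (2 * n) = (P [^]\<^bsub>G\<^esub> (2::nat)) [^]\<^bsub>G\<^esub> n"
      by (rule G.nat_pow_pow[symmetric]) simp
    then show ?thesis by (simp only: a_pow2 int_pow_int)
  qed
  moreover have "Q [^]\<^bsub>G\<^esub> (2 * n) = b \<up> int n"
  proof -
    have "Q [^]\<^bsub>G\<^esub> (2 * n) = (Q [^]\<^bsub>G\<^esub> (2::nat)) [^]\<^bsub>G\<^esub> n"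
      by (rule G.nat_pow_pow[symmetric]) simp
    then show ?thesis by (simp only: b_pow2 int_pow_int)
  qed
  ultimately have "P [^]\<^bsub>G\<^esub> (2 * n) \<cdot> Q [^]\<^bsub>G\<^esub> (2 * n) = sA (int n) (int n)"
    by (simp add: sA_def)
  then show "P [^]\<^bsub>G\<^esub> (2 * n) \<cdot> Q [^]\<^bsub>G\<^esub> (2 * n) = e1"
    using cn c_pow by simp
next
  have "P [^]\<^bsub>G\<^esub> (2 * Ag) = a \<up> int Ag"
  proof -
    have "P [^]\<^bsub>G\<^esub> (2 * Ag) = (P [^]\<^bsub>G\<^esub> (2::nat)) [^]\<^bsub>G\<^esub> Ag"
      by (rule G.nat_pow_pow[symmetric]) simp
    then show ?thesis by (simp only: a_pow2 int_pow_int)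
  qed
  also have "\<dots> = sA (int Ag) 0" by (simp add: sA_def)
  also have "\<dots> = e1" by (rule sA_L[OF Lset_Ag])
  finally show "P [^]\<^bsub>G\<^esub> (gcd (2*A) (lcm (2*B) (2 * n))) = e1" by (simp only: p'_eq)
next
  have "Q [^]\<^bsub>G\<^esub> (2 * Bg) = b \<up> int Bg"
  proof -
    have "Q [^]\<^bsub>G\<^esub> (2 * Bg) = (Q [^]\<^bsub>G\<^esub> (2::nat)) [^]\<^bsub>G\<^esub> Bg"
      by (rule G.nat_pow_pow[symmetric]) simp
    then show ?thesis by (simp only: b_pow2 int_pow_int)
  qed
  also have "\<dots> = sA 0 (int Bg)" by (simp add: sA_def)
  also have "\<dots> = e1" by (rule sA_L[OF Lset_Bg])
  finally show "Q [^]\<^bsub>G\<^esub> (gcd (2*B) (lcm (2*A) (2 * n))) = e1" by (simp only: q'_eq)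
next
  show "\<not> (gcd (2*A) (lcm (2*B) (2 * n)) mod 4 = 2 \<and> gcd (2*B) (lcm (2*A) (2 * n)) mod 4 = 2 \<and> n = 2)"
  proof
    assume "gcd (2*A) (lcm (2*B) (2 * n)) mod 4 = 2 \<and> gcd (2*B) (lcm (2*A) (2 * n)) mod 4 = 2 \<and> n = 2"
    then have h1: "gcd (2*A) (lcm (2*B) (2 * n)) mod 4 = 2" and h2: "gcd (2*B) (lcm (2*A) (2 * n)) mod 4 = 2"
      and n2: "n = 2" by blast+
    have h: "(2*Ag) mod 4 = 2" "(2*Bg) mod 4 = 2" using h1 h2 unfolding p'_eq q'_eq by blast+
    have "odd Ag" using h(1) by presburger
    moreover have "odd Bg" using h(2) by presburger
    ultimately have "odd (int Ag * int Bg)" by simp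
    then obtain w where w: "int Ag * int Bg = 2 * w + 1" by (metis oddE)
    have L: "(- int Bg * int Ag + (- int Ag) * 0 + w * int n, - int Bg * 0 + (- int Ag) * int Bg + w * int n) \<in> Lset"
      by (intro Lset_add Lset_smul Lset_Ag Lset_Bg Lset_n)
    have "(- 1, - 1) \<in> Lset"
    proof -
      have "- int Bg * int Ag + (- int Ag) * 0 + w * int n = -1" using w n2 by (simp add: algebra_simps)
      moreover have "- int Bg * 0 + (- int Ag) * int Bg + w * int n = -1" using w n2 by (simp add: algebra_simps)
      ultimately show ?thesis using L by simp
    qed
    moreover have "int n dvd 1 - (-1)" using n2 by simp
    ultimately have "teq (0,0,1,False) (1,1,-1,False)" by (simp add: teq_def)
    then have "E (0,0,1,False) = E (1,1,-1,False)" by (rule E_teq)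
    moreover have "E (0,0,1,False) = P \<cdot> Q" by (simp add: E_def Ax_def sA_def)
    moreover have "E (1,1,-1,False) = Q \<cdot> P"
      using E_mult[of "(0,1,-1,True)" "(0,0,0,True)"] by (simp add: E_Q E_P)
    ultimately show False using nc by simp
  qed
next
  have "order G = Ag * g * n * 2" by (simp add: order_def card_car)
  then show "2 * order G = gcd (2*A) (lcm (2*B) (2 * n)) * gcd (gcd (2*B) (lcm (2*A) (2 * n))) (2 * n) * n"
    unfolding p'_eq gq'_eq by simp
next
  show "comm_group (G\<lparr>carrier := S0\<rparr>)" by (rule S0_comm)
next
  show "\<forall>s\<in>S0. \<forall>y\<in>carrier G. s \<cdot> y = y \<cdot> s" using S0_central by blast
next
  show "4 * card S0 = gcd (2*A) (lcm (2*B) (2 * n)) * gcd (gcd (2*B) (lcm (2*A) (2 * n))) (2 * n)"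
    unfolding p'_eq gq'_eq card_S0 by simp
next
  show "G Mod S0 \<cong> dihedral_group n" by (rule quotient_iso)
qed

end

theorem theorem6:
  fixes p q n :: nat
  defines "G \<equiv> C_group p q n"
      and "P \<equiv> C_P p q n"
      and "Q \<equiv> C_Q p q n"
      and "p' \<equiv> gcd p (lcm q (2 * n))"
      and "q' \<equiv> gcd q (lcm p (2 * n))"
      and "S \<equiv> generate (C_group p q n) {C_P p q n [^]\<^bsub>C_group p q n\<^esub> (2::nat), C_Q p q n [^]\<^bsub>C_group p q n\<^esub> (2::nat)}"
  assumes "p > 0" and "q > 0" and "n > 0"
      and "P \<otimes>\<^bsub>G\<^esub> Q \<noteq> Q \<otimes>\<^bsub>G\<^esub> P"
  shows "even p \<and> even q
    \<and> P [^]\<^bsub>G\<^esub> (2 * n) \<otimes>\<^bsub>G\<^esub> Q [^]\<^bsub>G\<^esub> (2 * n) = \<one>\<^bsub>G\<^esub>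
    \<and> P [^]\<^bsub>G\<^esub> p' = \<one>\<^bsub>G\<^esub> \<and> Q [^]\<^bsub>G\<^esub> q' = \<one>\<^bsub>G\<^esub>
    \<and> \<not> (p' mod 4 = 2 \<and> q' mod 4 = 2 \<and> n = 2)
    \<and> 2 * order G = p' * gcd q' (2 * n) * n
    \<and> comm_group (G\<lparr>carrier := S\<rparr>)
    \<and> (\<forall>s\<in>S. \<forall>g\<in>carrier G. s \<otimes>\<^bsub>G\<^esub> g = g \<otimes>\<^bsub>G\<^esub> s)
    \<and> 4 * card S = p' * gcd q' (2 * n)
    \<and> G Mod S \<cong> dihedral_group n"
proof -
  have ev: "even p \<and> even q"
    using cg.even_pq[of p q n] assms(10) unfolding G_def P_def Q_def by blast
  then obtain A B where pA: "p = 2*A" and qB: "q = 2*B" by (auto elim!: evenE)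
  have "A > 0" "B > 0" using assms(7,8) pA qB by simp_all
  then interpret cq A B n using assms(9) by unfold_locales simp_all
  have nc: "C_P (2*A) (2*B) n \<otimes>\<^bsub>C_group (2*A) (2*B) n\<^esub> C_Q (2*A) (2*B) n \<noteq>
            C_Q (2*A) (2*B) n \<otimes>\<^bsub>C_group (2*A) (2*B) n\<^esub> C_P (2*A) (2*B) n"
    using assms(10) unfolding G_def P_def Q_def pA qB .
  show ?thesis
    unfolding G_def P_def Q_def p'_def q'_def S_def pA qB
    by (rule main_cq[OF nc])
qed



end
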